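(* Let $I=[0,1]$ and $f_{1,\infty}$ an $m$-periodic sequence of continuous self-maps of $I$. If $(I,f_{1,\infty})$ is sensitive, then it is syndetically sensitive, ergodically sensitive, collectively sensitive and multi-sensitive.
   Context: $m$-periodic: $f_{n+m}=f_n$ for all $n$. Write $f_1^n=f_n\circ\cdots\circ f_1$ and, for open $U$ and $\delta>0$, $N_{f_{1,\infty}}(U,\delta)=\{n\in\mathbb{N}:\exists x,y\in U,\ |f_1^n(x)-f_1^n(y)|>\delta\}$. Sensitive: there is $\delta>0$ such that for every $x\in I$ and neighbourhood $U$ of $x$ there are $y\in U$, $n\in\mathbb{N}$ with $|f_1^n(x)-f_1^n(y)|>\delta$. A set $F\subseteq\mathbb{N}$ is syndetic if there is $a\in\mathbb{N}$ with $\{i,\dots,i+a\}\cap F\ne\emptyset$ for all $i$; upper density $\overline{d}(S)=\limsup_{n\to\infty}\frac1n|S\cap\{0,\dots,n-1\}|$. Syndetically (resp. ergodically) sensitive: there is $\delta>0$ with $N_{f_{1,\infty}}(U,\delta)$ syndetic (resp. of positive upper density) for every non-empty open $U$. Multi-sensitive: there is $\delta>0$ such that for every $k$ and non-empty open $V_1,\dots,V_k$, $\bigcap_{i=1}^kN_{f_{1,\infty}}(V_i,\delta)\ne\emptyset$. Collectively sensitive: there is $\delta>0$ such that for any points $x_1,\dots,x_k\in I$ and any $\epsilon>0$ there exist $y_1,\dots,y_k$ with $|x_i-y_i|<\epsilon$, $n\in\mathbb{N}$ and $i_0\in\{1,\dots,k\}$ such that for each $i$, $|f_1^n(x_i)-f_1^n(y_{i_0})|>\delta$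 or $|f_1^n(y_i)-f_1^n(x_{i_0})|>\delta$. *)

theory Defs
  imports "HOL-Analysis.Analysis" "HOL-Library.Liminf_Limsup"
begin

text \<open>A non-autonomous system on I = [0,1] is given by maps f 1, f 2, ... :: real => real
  (the value f 0 is irrelevant). The composition f_1^n = f n o ... o f 1, f_1^0 = id.\<close>

fun iter_comp :: "(nat \<Rightarrow> real \<Rightarrow> real) \<Rightarrow> nat \<Rightarrow> real \<Rightarrow> real" where
  "iter_comp f 0 = id"
| "iter_comp f (Suc n) = f (Suc n) \<circ> iter_comp f n"

definition I01 :: "real set" where "I01 = {0..1}"

definition periodic_seq :: "(nat \<Rightarrow> real \<Rightarrow> real) \<Rightarrow> nat \<Rightarrow> bool" where
  "periodic_seq f m \<longleftrightarrow> m \<ge> 1 \<and> (\<forall>n\<ge>1. f (n + m) = f n)"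

definition cont_self_maps :: "(nat \<Rightarrow> real \<Rightarrow> real) \<Rightarrow> bool" where
  "cont_self_maps f \<longleftrightarrow> (\<forall>n\<ge>1. continuous_on I01 (f n) \<and> f n ` I01 \<subseteq> I01)"

definition Nset :: "(nat \<Rightarrow> real \<Rightarrow> real) \<Rightarrow> real set \<Rightarrow> real \<Rightarrow> nat set" where
  "Nset f U \<delta> = {n. n \<ge> 1 \<and> (\<exists>x\<in>U. \<exists>y\<in>U. \<bar>iter_comp f n x - iter_comp f n y\<bar> > \<delta>)}"

definition syndetic :: "nat set \<Rightarrow> bool" where
  "syndetic F \<longleftrightarrow> (\<exists>a. \<forall>i. {i..i+a} \<inter> F \<noteq> {})"

definition upper_density :: "nat set \<Rightarrow> ereal" where
  "upper_density S = limsup (\<lambda>n. ereal (real (card (S \<inter> {0..<n})) / real n))"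

definition sensitive :: "(nat \<Rightarrow> real \<Rightarrow> real) \<Rightarrow> bool" where
  "sensitive f \<longleftrightarrow> (\<exists>\<delta>>0. \<forall>x\<in>I01. \<forall>U. openin (top_of_set I01) U \<and> x \<in> U \<longrightarrow>
      (\<exists>y\<in>U. \<exists>n\<ge>1. \<bar>iter_comp f n x - iter_comp f n y\<bar> > \<delta>))"

definition syndetically_sensitive :: "(nat \<Rightarrow> real \<Rightarrow> real) \<Rightarrow> bool" where
  "syndetically_sensitive f \<longleftrightarrow> (\<exists>\<delta>>0. \<forall>U. openin (top_of_set I01) U \<and> U \<noteq> {} \<longrightarrow>
      syndetic (Nset f U \<delta>))"

definition ergodically_sensitive :: "(nat \<Rightarrow> real \<Rightarrow> real) \<Rightarrow> bool" where
  "ergodically_sensitive f \<longleftrightarrow> (\<exists>\<delta>>0. \<forall>U. openin (top_of_set I01) U \<and> U \<noteq> {} \<longrightarrow>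
      upper_density (Nset f U \<delta>) > 0)"

definition multi_sensitive :: "(nat \<Rightarrow> real \<Rightarrow> real) \<Rightarrow> bool" where
  "multi_sensitive f \<longleftrightarrow> (\<exists>\<delta>>0. \<forall>k\<ge>1. \<forall>V :: nat \<Rightarrow> real set.
      (\<forall>i\<in>{1..k}. openin (top_of_set I01) (V i) \<and> V i \<noteq> {}) \<longrightarrow>
      (\<Inter>i\<in>{1..k}. Nset f (V i) \<delta>) \<noteq> {})"

definition collectively_sensitive :: "(nat \<Rightarrow> real \<Rightarrow> real) \<Rightarrow> bool" where
  "collectively_sensitive f \<longleftrightarrow> (\<exists>\<delta>>0. \<forall>k\<ge>1. \<forall>x :: nat \<Rightarrow> real. \<forall>\<epsilon>>0.
      (\<forall>i\<in>{1..k}. x i \<in> I01) \<longrightarrow>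
      (\<exists>y :: nat \<Rightarrow> real. \<exists>n\<ge>1. \<exists>i0\<in>{1..k}.
         (\<forall>i\<in>{1..k}. y i \<in> I01 \<and> \<bar>x i - y i\<bar> < \<epsilon>) \<and>
         (\<forall>i\<in>{1..k}. \<bar>iter_comp f n (x i) - iter_comp f n (y i0)\<bar> > \<delta> \<or>
                       \<bar>iter_comp f n (y i) - iter_comp f n (x i0)\<bar> > \<delta>)))"

end

theory Submission
  imports Defs
begin

definition cell :: "nat \<Rightarrow> nat \<Rightarrow> real set" where
  "cell R c = {real c / real R .. (real c + 1) / real R}"

lemma fin_cofinite:
  "finite K \<Longrightarrow> (\<forall>i\<in>K. \<exists>N::nat. \<forall>n\<ge>N. P i n) \<Longrightarrow> \<exists>N. \<forall>i\<in>K. \<forall>n\<ge>N. P i n"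
proof (induction K rule: finite_induct)
  case empty then show ?case by auto
next
  case (insert x F)
  then obtain N1 where N1: "\<forall>i\<in>F. \<forall>n\<ge>N1. P i n" by auto
  from insert obtain N2 where N2: "\<forall>n\<ge>N2. P x n" by auto
  show ?case using N1 N2 by (intro exI[of _ "max N1 N2"]) auto
qed

lemma contains_cell: assumes "R > 0" "0 \<le> u" "u + 2 / real R \<le> v" "v \<le> 1"
  shows "\<exists>c<R. cell R c \<subseteq> {u..v}"
proof -
  define c where "c = nat \<lceil>u * real R\<rceil>"
  have Rp: "real R > 0" using assms by simp
  have "0 \<le> u * real R" using assms by simp
  then have cc: "real c = of_int \<lceil>u * real R\<rceil>" by (simp add: c_def)
  have c1: "u * real R \<le> real c" "real c < u * real R + 1" unfolding cc by linarith+
  have l: "u \<le> real c / real R" using c1 Rp by (simp add: pos_le_divide_eq)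
  have "(real c + 1) / real R < (u * real R + 2) / real R" using c1 Rp by (simp add: divide_strict_right_mono)
  also have "\<dots> = u + 2 / real R" using Rp by (simp add: field_simps)
  finally have r: "(real c + 1) / real R \<le> v" using assms by linarith
  then have "(real c + 1) / real R \<le> 1" using assms by linarith
  then have "real c + 1 \<le> real R" using Rp by (simp add: pos_divide_le_eq)
  then have "c < R" by linarith
  moreover have "cell R c \<subseteq> {u..v}" using l r by (auto simp: cell_def)
  ultimately show ?thesis by blast
qed

lemma cell_props: "c < R \<Longrightarrow> 0 \<le> real c / real R \<and> real c / real R < (real c + 1) / real R \<and> (real c + 1) / real R \<le> 1"
  by (auto simp: divide_strict_right_mono pos_divide_le_eq)

lemma open_int: assumes "openin (top_of_set I01) U" "x \<in> U"
  shows "\<exists>a b. 0 \<le> a \<and> a < b \<and> b \<le> 1 \<and> {a..b} \<subseteq> U"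
proof -
  obtain V where V: "open V" "U = I01 \<inter> V" using assms(1) unfolding openin_open by blast
  then obtain e where e: "e > 0" "ball x e \<subseteq> V" using assms(2) open_contains_ball by blast
  have x: "0 \<le> x" "x \<le> 1" using assms V by (auto simp: I01_def)
  define a where "a = max 0 (x - e/2)"
  define b where "b = min 1 (x + e/2)"
  have "{a..b} \<subseteq> ball x e" using e by (auto simp: a_def b_def dist_real_def)
  moreover have "{a..b} \<subseteq> I01" by (auto simp: a_def b_def I01_def)
  moreover have "0 \<le> a" "a < b" "b \<le> 1" using e x by (auto simp: a_def b_def)
  ultimately show ?thesis using V e by (intro exI[of _ a] exI[of _ b]) auto
qed

locale sys =
  fixes f :: "nat \<Rightarrow> real \<Rightarrow> real" and m :: nat and \<delta> :: real
  assumes per: "periodic_seq f m" and cont: "cont_self_maps f" and dpos: "\<delta> > 0"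
  and sens: "\<forall>x\<in>I01. \<forall>U. openin (top_of_set I01) U \<and> x \<in> U \<longrightarrow>
      (\<exists>y\<in>U. \<exists>n\<ge>1. \<bar>iter_comp f n x - iter_comp f n y\<bar> > \<delta>)"
begin

abbreviation F where "F \<equiv> iter_comp f"

lemma mpos: "m \<ge> 1" using per by (simp add: periodic_seq_def)

lemma F_in: "x \<in> I01 \<Longrightarrow> F n x \<in> I01"
proof (induction n)
  case 0 then show ?case by simp
next
  case (Suc n)
  then show ?case using cont unfolding cont_self_maps_def
    by (auto simp: image_subset_iff)
qed

lemma F_cont: "continuous_on I01 (F n)"
proof (induction n)
  case 0 then show ?case by (simp add: continuous_on_id)
next
  case (Suc n)
  have "continuous_on I01 (f (Suc n))" using cont by (simp add: cont_self_maps_def)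
  moreover have "F n ` I01 \<subseteq> I01" using F_in by auto
  ultimately have "continuous_on (F n ` I01) (f (Suc n))" using continuous_on_subset by blast
  then show ?case using Suc continuous_on_compose by fastforce
qed

lemma F_shift: "F (s + t) = iter_comp (\<lambda>i. f (i + t)) s \<circ> F t"
  by (induction s) auto

lemma f_per: "n \<ge> 1 \<Longrightarrow> f (n + k*m) = f n"
proof (induction k)
  case 0 then show ?case by simp
next
  case (Suc k)
  have "f (n + Suc k * m) = f ((n + k*m) + m)" by (simp add: algebra_simps)
  also have "\<dots> = f (n + k*m)" using per Suc.prems unfolding periodic_seq_def by simp
  finally show ?case using Suc by simp
qed

lemma F_per: "F (n + k*m) = F n \<circ> F (k*m)"
proof (induction n)
  case 0 then show ?case by simp
next
  case (Suc n)
  have "F (Suc n + k*m) = f (Suc n + k*m) \<circ> F (n + k*m)" by simp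
  also have "\<dots> = f (Suc n) \<circ> (F n \<circ> F (k*m))" using f_per[of "Suc n" k] Suc by (simp add: comp_def)
  finally show ?case by (simp add: o_assoc)
qed

lemma UC: "\<exists>\<rho>>0. \<forall>j\<le>T. \<forall>x\<in>I01. \<forall>y\<in>I01. \<bar>x - y\<bar> < \<rho> \<longrightarrow> \<bar>F j x - F j y\<bar> < \<delta>"
proof (induction T)
  case 0 then show ?case using dpos by (intro exI[of _ \<delta>]) auto
next
  case (Suc T)
  then obtain \<rho>1 where r1: "\<rho>1 > 0" "\<forall>j\<le>T. \<forall>x\<in>I01. \<forall>y\<in>I01. \<bar>x - y\<bar> < \<rho>1 \<longrightarrow> \<bar>F j x - F j y\<bar> < \<delta>" by blast
  have "uniformly_continuous_on I01 (F (Suc T))"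
    using compact_uniformly_continuous[OF F_cont] unfolding I01_def by blast
  then obtain \<rho>2 where r2: "\<rho>2 > 0" "\<forall>x\<in>I01. \<forall>x'\<in>I01. dist x' x < \<rho>2 \<longrightarrow> dist (F (Suc T) x') (F (Suc T) x) < \<delta>"
    unfolding uniformly_continuous_on_def using dpos by blast
  show ?case
  proof (intro exI[of _ "min \<rho>1 \<rho>2"] conjI allI impI ballI)
    show "min \<rho>1 \<rho>2 > 0" using r1 r2 by simp
    fix j x y assume j: "j \<le> Suc T" and x: "x \<in> I01" and y: "y \<in> I01" and xy: "\<bar>x - y\<bar> < min \<rho>1 \<rho>2"
    show "\<bar>F j x - F j y\<bar> < \<delta>"
    proof (cases "j \<le> T")
      case True then show ?thesis using r1 x y xy by auto
    next
      case False then have "j = Suc T" using j by simp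
      then show ?thesis using r2 x y xy by (auto simp: dist_real_def)
    qed
  qed
qed

lemma openin_Ioo: "0 \<le> a \<Longrightarrow> b \<le> 1 \<Longrightarrow> openin (top_of_set I01) {a<..<b}"
  unfolding openin_open I01_def by (intro exI[of _ "{a<..<b}"]) auto

lemma S: assumes "0 \<le> a" "a < b" "b \<le> 1"
  shows "\<exists>x y n. x \<in> {a..b} \<and> y \<in> {a..b} \<and> n > T \<and> \<bar>F n x - F n y\<bar> > \<delta>"
proof -
  obtain \<rho> where r: "\<rho> > 0" "\<forall>j\<le>T. \<forall>x\<in>I01. \<forall>y\<in>I01. \<bar>x - y\<bar> < \<rho> \<longrightarrow> \<bar>F j x - F j y\<bar> < \<delta>"
    using UC by blast
  define a' where "a' = min b (a + \<rho>/2)"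
  have aa: "a < a'" "a' \<le> b" "a' - a \<le> \<rho>/2" using assms r by (auto simp: a'_def min_def)
  define x where "x = (a + a') / 2"
  have xU: "x \<in> {a<..<a'}" using aa by (auto simp: x_def)
  have xI: "x \<in> I01" using xU aa assms by (auto simp: I01_def)
  obtain y n where y: "y \<in> {a<..<a'}" "n \<ge> 1" "\<bar>F n x - F n y\<bar> > \<delta>"
    using sens xI xU openin_Ioo[of a a'] assms aa by fastforce
  have yI: "y \<in> I01" using y aa assms by (auto simp: I01_def)
  have "\<bar>x - y\<bar> < \<rho>" using xU y aa r by auto
  then have "n > T" using r xI yI y by (meson not_less not_less_iff_gr_or_eq)
  then show ?thesis using xU y aa by (intro exI[of _ x] exI[of _ y] exI[of _ n]) auto
qed

lemma nonconst: assumes "0 \<le> a" "a < b" "b \<le> 1"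
  shows "\<exists>x\<in>{a..b}. \<exists>y\<in>{a..b}. F t x \<noteq> F t y"
proof -
  obtain x y n where h: "x \<in> {a..b}" "y \<in> {a..b}" "n > t" "\<bar>F n x - F n y\<bar> > \<delta>"
    using S[OF assms, of t] by blast
  have "F n = iter_comp (\<lambda>i. f (i + t)) (n - t) \<circ> F t" using F_shift[of "n - t" t] h(3) by simp
  then have "F t x \<noteq> F t y" using h(4) dpos by auto
  then show ?thesis using h by blast
qed

lemma seg: assumes "J \<subseteq> I01" "is_interval J" "u \<in> J" "v \<in> J"
  shows "closed_segment (F n u) (F n v) \<subseteq> F n ` J"
proof -
  have "connected J" using assms(2) by (simp add: is_interval_connected)
  moreover have "continuous_on J (F n)" by (rule continuous_on_subset[OF F_cont assms(1)])
  ultimately have "connected (F n ` J)" by (rule connected_continuous_image[rotated])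
  then have "convex (F n ` J)" using connected_convex_1 by blast
  moreover have "F n u \<in> F n ` J" "F n v \<in> F n ` J" using assms by auto
  ultimately show ?thesis by (intro closed_segment_subset)
qed

lemma A: "\<exists>R>0. \<forall>a b. 0 \<le> a \<longrightarrow> a < b \<longrightarrow> b \<le> 1 \<longrightarrow> (\<exists>k\<ge>1. \<exists>c<R. cell R c \<subseteq> F (k*m) ` {a..b})"
proof -
  obtain \<rho> where r: "\<rho> > 0" "\<forall>j\<le>m. \<forall>x\<in>I01. \<forall>y\<in>I01. \<bar>x - y\<bar> < \<rho> \<longrightarrow> \<bar>F j x - F j y\<bar> < \<delta>"
    using UC by blast
  obtain R :: nat where R: "real R > 2 / \<rho>" using reals_Archimedean2 by blast
  have "2 / \<rho> > 0" using r by simp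
  then have Rp: "R > 0" using R by linarith
  have "2 < \<rho> * real R" using R r by (simp add: pos_divide_less_eq mult.commute)
  then have R2: "2 / real R < \<rho>" using Rp by (simp add: pos_divide_less_eq mult.commute)
  have "\<exists>k\<ge>1. \<exists>c<R. cell R c \<subseteq> F (k*m) ` {a..b}" if ab: "0 \<le> a" "a < b" "b \<le> 1" for a b
  proof -
    obtain x y n where h: "x \<in> {a..b}" "y \<in> {a..b}" "n > m" "\<bar>F n x - F n y\<bar> > \<delta>"
      using S[OF ab, of m] by blast
    define k where "k = n div m"
    define r' where "r' = n mod m"
    have n: "n = r' + k*m" by (simp add: k_def r'_def)
    have "0 < n div m" using h(3) mpos by (simp add: div_greater_zero_iff)
    then have k1: "k \<ge> 1" by (simp add: k_def)
    have r'm: "r' \<le> m" using mpos by (simp add: r'_def)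
    have xI: "x \<in> I01" and yI: "y \<in> I01" using h ab by (auto simp: I01_def)
    define X where "X = F (k*m) x"
    define Y where "Y = F (k*m) y"
    have XI: "X \<in> I01" "Y \<in> I01" using F_in xI yI by (auto simp: X_def Y_def)
    have "F n = F r' \<circ> F (k*m)" using F_per[of r' k] n by simp
    then have "\<bar>F r' X - F r' Y\<bar> > \<delta>" using h(4) by (simp add: X_def Y_def)
    moreover have "\<bar>X - Y\<bar> < \<rho> \<Longrightarrow> \<bar>F r' X - F r' Y\<bar> < \<delta>" using r(2) r'm XI by blast
    ultimately have "\<not> \<bar>X - Y\<bar> < \<rho>" by linarith
    then have uv: "min X Y + 2 / real R \<le> max X Y" using R2 by (auto simp: min_def max_def)
    have "0 \<le> min X Y" "max X Y \<le> 1" using XI by (auto simp: I01_def)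
    then obtain c where c: "c < R" "cell R c \<subseteq> {min X Y..max X Y}" using contains_cell[OF Rp _ uv] by blast
    have "{min X Y..max X Y} = closed_segment X Y" by (simp add: closed_segment_eq_real_ivl min_def max_def)
    also have "\<dots> \<subseteq> F (k*m) ` {a..b}" unfolding X_def Y_def
      by (rule seg) (use h ab in \<open>auto simp: I01_def\<close>)
    finally show ?thesis using c k1 by blast
  qed
  then show ?thesis using Rp by blast
qed

lemma trans_img: "B \<subseteq> F (k1*m) ` X \<Longrightarrow> C \<subseteq> F (k2*m) ` B \<Longrightarrow> C \<subseteq> F ((k1+k2)*m) ` X"
proof -
  assume 1: "B \<subseteq> F (k1*m) ` X" and 2: "C \<subseteq> F (k2*m) ` B"
  have e: "(k1+k2)*m = k2*m + k1*m" by (simp add: algebra_simps)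
  have "F ((k1+k2)*m) = F (k2*m) \<circ> F (k1*m)" unfolding e by (rule F_per)
  then have "F ((k1+k2)*m) ` X = F (k2*m) ` (F (k1*m) ` X)" by (simp only: image_comp)
  moreover have "F (k2*m) ` B \<subseteq> F (k2*m) ` (F (k1*m) ` X)" using 1 by (rule image_mono)
  ultimately show ?thesis using 2 by (metis order_trans)
qed

lemma power_img: "A \<subseteq> F (P*m) ` A \<Longrightarrow> A \<subseteq> F ((q*P)*m) ` A"
proof (induction q)
  case 0 then show ?case by simp
next
  case (Suc q)
  have "A \<subseteq> F ((q*P + P)*m) ` A" using trans_img[OF Suc.IH[OF Suc.prems] Suc.prems] .
  moreover have "q*P + P = Suc q * P" by simp
  ultimately show ?case by (simp only:)
qed

lemma cycle:
  assumes succ: "\<forall>a<R. \<exists>k\<ge>1. \<exists>b<R. cell R b \<subseteq> F (k*m) ` cell R a"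
  shows "a < R \<Longrightarrow> \<exists>c<R. \<exists>s P. P \<ge> 1 \<and> cell R c \<subseteq> F (s*m) ` cell R a \<and> cell R c \<subseteq> F (P*m) ` cell R c"
proof -
  define Reach where "Reach a = {b. b < R \<and> (\<exists>k. cell R b \<subseteq> F (k*m) ` cell R a)}" for a
  have fin: "finite (Reach a)" for a by (rule finite_subset[of _ "{..<R}"]) (auto simp: Reach_def)
  have "\<forall>a. a < R \<longrightarrow> card (Reach a) = N \<longrightarrow> (\<exists>c<R. \<exists>s P. P \<ge> 1 \<and> cell R c \<subseteq> F (s*m) ` cell R a \<and> cell R c \<subseteq> F (P*m) ` cell R c)" for N
  proof (induction N rule: less_induct)
    case (less N)
    show ?case
    proof (intro allI impI)
      fix a assume a: "a < R" and cN: "card (Reach a) = N"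
      show "\<exists>c<R. \<exists>s P. P \<ge> 1 \<and> cell R c \<subseteq> F (s*m) ` cell R a \<and> cell R c \<subseteq> F (P*m) ` cell R c"
      proof (cases "\<exists>k\<ge>1. cell R a \<subseteq> F (k*m) ` cell R a")
        case True
        then obtain k where "k \<ge> 1" "cell R a \<subseteq> F (k*m) ` cell R a" by blast
        moreover have "cell R a \<subseteq> F (0*m) ` cell R a" by simp
        ultimately show ?thesis using a by blast
      next
        case False
        obtain k b where kb: "k \<ge> 1" "b < R" "cell R b \<subseteq> F (k*m) ` cell R a" using succ a by blast
        have sub: "Reach b \<subseteq> Reach a"
        proof
          fix b' assume "b' \<in> Reach b"
          then obtain k' where k': "b' < R" "cell R b' \<subseteq> F (k'*m) ` cell R b" by (auto simp: Reach_def)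
          have "cell R b' \<subseteq> F ((k+k')*m) ` cell R a" by (rule trans_img[OF kb(3) k'(2)])
          then show "b' \<in> Reach a" using k'(1) unfolding Reach_def by blast
        qed
        have "a \<in> Reach a" using a by (auto simp: Reach_def intro!: exI[of _ 0])
        moreover have "a \<notin> Reach b"
        proof
          assume "a \<in> Reach b"
          then obtain k' where "cell R a \<subseteq> F (k'*m) ` cell R b" by (auto simp: Reach_def)
          then have "cell R a \<subseteq> F ((k+k')*m) ` cell R a" using trans_img[OF kb(3)] by blast
          then show False using False kb(1) by (metis le_add1 order_trans)
        qed
        ultimately have "Reach b \<subset> Reach a" using sub by blast
        then have "card (Reach b) < N" using cN fin psubset_card_mono by blast
        then obtain c s P where cs: "c < R" "P \<ge> 1" "cell R c \<subseteq> F (s*m) ` cell R b" "cell R c \<subseteq> F (P*m) ` cell R c"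
          using less.IH kb(2) by blast
        have "cell R c \<subseteq> F ((k+s)*m) ` cell R a" using trans_img[OF kb(3) cs(3)] .
        then show ?thesis using cs by blast
      qed
    qed
  qed
  then show "a < R \<Longrightarrow> ?thesis" by blast
qed

lemma C: "\<exists>\<eta>>0. \<forall>a b. 0 \<le> a \<longrightarrow> a < b \<longrightarrow> b \<le> 1 \<longrightarrow>
    (\<exists>N. \<forall>n\<ge>N. \<exists>x\<in>{a..b}. \<exists>y\<in>{a..b}. \<bar>F n x - F n y\<bar> \<ge> \<eta>)"
proof -
  obtain R where Rp: "R > 0" and A': "\<forall>a b. 0 \<le> a \<longrightarrow> a < b \<longrightarrow> b \<le> 1 \<longrightarrow> (\<exists>k\<ge>1. \<exists>c<R. cell R c \<subseteq> F (k*m) ` {a..b})"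
    using A by blast
  have succ: "\<forall>a<R. \<exists>k\<ge>1. \<exists>b<R. cell R b \<subseteq> F (k*m) ` cell R a"
  proof (intro allI impI)
    fix a assume "a < R"
    then have "0 \<le> real a / real R" "real a / real R < (real a + 1) / real R" "(real a + 1) / real R \<le> 1"
      using cell_props by blast+
    then show "\<exists>k\<ge>1. \<exists>b<R. cell R b \<subseteq> F (k*m) ` cell R a" using A' unfolding cell_def by blast
  qed
  have "\<forall>a. \<exists>z::nat\<times>nat\<times>nat. a < R \<longrightarrow> (fst z < R \<and> snd (snd z) \<ge> 1 \<and> cell R (fst z) \<subseteq> F (fst (snd z) * m) ` cell R a \<and> cell R (fst z) \<subseteq> F (snd (snd z) * m) ` cell R (fst z))"
    using cycle[OF succ] by fastforce
  then obtain Z where Z: "\<forall>a. a < R \<longrightarrow> (fst (Z a) < R \<and> snd (snd (Z a)) \<ge> 1 \<and> cell R (fst (Z a)) \<subseteq> F (fst (snd (Z a)) * m) ` cell R a \<and> cell R (fst (Z a)) \<subseteq> F (snd (snd (Z a)) * m) ` cell R (fst (Z a)))"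
    using choice[of "\<lambda>a z. a < R \<longrightarrow> (fst z < R \<and> snd (snd z) \<ge> 1 \<and> cell R (fst z) \<subseteq> F (fst (snd z) * m) ` cell R a \<and> cell R (fst z) \<subseteq> F (snd (snd z) * m) ` cell R (fst z))"] by blast
  define cc where "cc a = fst (Z a)" for a
  define ss where "ss a = fst (snd (Z a))" for a
  define PP where "PP a = snd (snd (Z a))" for a
  have cyc: "\<And>a. a < R \<Longrightarrow> cc a < R \<and> PP a \<ge> 1 \<and> cell R (cc a) \<subseteq> F (ss a * m) ` cell R a \<and> cell R (cc a) \<subseteq> F (PP a * m) ` cell R (cc a)"
    using Z unfolding cc_def ss_def PP_def by blast
  have "\<forall>a t. a < R \<longrightarrow> (\<exists>p q. p \<in> cell R (cc a) \<and> q \<in> cell R (cc a) \<and> F t p \<noteq> F t q)"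
  proof (intro allI impI)
    fix a t assume "a < R"
    then have "cc a < R" using cyc by blast
    then have "0 \<le> real (cc a) / real R" "real (cc a) / real R < (real (cc a) + 1) / real R" "(real (cc a) + 1) / real R \<le> 1"
      using cell_props by blast+
    from nonconst[OF this] show "\<exists>p q. p \<in> cell R (cc a) \<and> q \<in> cell R (cc a) \<and> F t p \<noteq> F t q"
      unfolding cell_def by blast
  qed
  then have "\<forall>a t. \<exists>z::real\<times>real. a < R \<longrightarrow> (fst z \<in> cell R (cc a) \<and> snd z \<in> cell R (cc a) \<and> F t (fst z) \<noteq> F t (snd z))"
    by fastforce
  then have "\<forall>w. \<exists>z::real\<times>real. fst w < R \<longrightarrow> (fst z \<in> cell R (cc (fst w)) \<and> snd z \<in> cell R (cc (fst w)) \<and> F (snd w) (fst z) \<noteq> F (snd w) (snd z))"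
    by simp
  then obtain W where W: "\<forall>w. fst w < R \<longrightarrow> (fst (W w) \<in> cell R (cc (fst w)) \<and> snd (W w) \<in> cell R (cc (fst w)) \<and> F (snd w) (fst (W w)) \<noteq> F (snd w) (snd (W w)))"
    using choice[of "\<lambda>w z. fst w < R \<longrightarrow> (fst z \<in> cell R (cc (fst w)) \<and> snd z \<in> cell R (cc (fst w)) \<and> F (snd w) (fst z) \<noteq> F (snd w) (snd z))"] by blast
  define pp where "pp a t = fst (W (a,t))" for a t
  define qq where "qq a t = snd (W (a,t))" for a t
  have pq: "\<And>a t. a < R \<Longrightarrow> pp a t \<in> cell R (cc a) \<and> qq a t \<in> cell R (cc a) \<and> F t (pp a t) \<noteq> F t (qq a t)"
    using W unfolding pp_def qq_def by fastforce
  define d where "d a t = \<bar>F t (pp a t) - F t (qq a t)\<bar>" for a t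
  define Sg where "Sg = (SIGMA a:{..<R}. {..<PP a * m})"
  define \<eta> where "\<eta> = Min (insert 1 ((\<lambda>(a,t). d a t) ` Sg))"
  have finS: "finite (insert 1 ((\<lambda>(a,t). d a t) ` Sg))" unfolding Sg_def by auto
  have dpos': "a < R \<Longrightarrow> d a t > 0" for a t using pq[of a t] by (simp add: d_def)
  have etapos: "\<eta> > 0" unfolding \<eta>_def using finS
    by (subst Min_gr_iff) (auto simp: Sg_def dpos')
  have etale: "\<eta> \<le> d a t" if "a < R" "t < PP a * m" for a t
  proof -
    have "d a t \<in> insert 1 ((\<lambda>(a,t). d a t) ` Sg)" using that unfolding Sg_def by force
    then show ?thesis unfolding \<eta>_def using finS Min_le by blast
  qed
  have "\<exists>N. \<forall>n\<ge>N. \<exists>x\<in>{a..b}. \<exists>y\<in>{a..b}. \<bar>F n x - F n y\<bar> \<ge> \<eta>" if ab: "0 \<le> a" "a < b" "b \<le> 1" for a b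
  proof -
    obtain k a0 where k: "k \<ge> 1" "a0 < R" "cell R a0 \<subseteq> F (k*m) ` {a..b}" using A' ab by blast
    define c where "c = cc a0"
    define s where "s = ss a0"
    define P where "P = PP a0"
    have cy: "c < R" "P \<ge> 1" "cell R c \<subseteq> F (s * m) ` cell R a0" "cell R c \<subseteq> F (P * m) ` cell R c"
      using cyc[OF k(2)] by (auto simp: c_def s_def P_def)
    have c1: "cell R c \<subseteq> F ((k+s)*m) ` {a..b}" by (rule trans_img[OF k(3) cy(3)])
    have Pm: "P * m > 0" using cy(2) mpos by simp
    show ?thesis
    proof (intro exI[of _ "(k+s)*m"] allI impI)
      fix n assume nN: "(k+s)*m \<le> n"
      define t where "t = (n - (k+s)*m) mod (P*m)"
      define q where "q = (n - (k+s)*m) div (P*m)"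
      have tP: "t < P * m" using Pm by (simp add: t_def)
      have "n - (k+s)*m = t + q * (P*m)" unfolding t_def q_def by (rule mod_div_mult_eq[symmetric])
      then have "n = (k+s)*m + (t + q*(P*m))" using nN by linarith
      also have "\<dots> = t + (k + s + q*P)*m" by (simp add: add_mult_distrib mult.assoc)
      finally have ndec: "n = t + (k + s + q*P)*m" .
      have c2: "cell R c \<subseteq> F ((k+s + q*P)*m) ` {a..b}"
        by (rule trans_img[OF c1 power_img[OF cy(4)]])
      have Fn: "F n = F t \<circ> F ((k + s + q*P)*m)" unfolding ndec by (rule F_per)
      have pqc: "pp a0 t \<in> cell R c" "qq a0 t \<in> cell R c" using pq[OF k(2)] by (auto simp: c_def)
      have "pp a0 t \<in> F ((k+s + q*P)*m) ` {a..b}" using c2 pqc(1) by (rule subsetD)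
      then obtain x where x: "x \<in> {a..b}" "pp a0 t = F ((k+s + q*P)*m) x" by (rule imageE)
      have "qq a0 t \<in> F ((k+s + q*P)*m) ` {a..b}" using c2 pqc(2) by (rule subsetD)
      then obtain y where y: "y \<in> {a..b}" "qq a0 t = F ((k+s + q*P)*m) y" by (rule imageE)
      have "\<bar>F n x - F n y\<bar> = d a0 t" unfolding d_def Fn o_apply x(2) y(2) ..
      moreover have "\<eta> \<le> d a0 t" using etale[OF k(2)] tP by (simp add: P_def)
      ultimately have "\<eta> \<le> \<bar>F n x - F n y\<bar>" by simp
      then show "\<exists>x\<in>{a..b}. \<exists>y\<in>{a..b}. \<bar>F n x - F n y\<bar> \<ge> \<eta>" using x(1) y(1) by blast
    qed
  qed
  then show ?thesis using etapos by blast
qed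

end

theorem theorem4p3:
  fixes f :: "nat \<Rightarrow> real \<Rightarrow> real" and m :: nat
  assumes "periodic_seq f m"
    and "cont_self_maps f"
    and "sensitive f"
  shows "syndetically_sensitive f \<and> ergodically_sensitive f \<and>
         collectively_sensitive f \<and> multi_sensitive f"
proof -
  obtain \<delta> where dp: "\<delta> > 0" and sd: "\<forall>x\<in>I01. \<forall>U. openin (top_of_set I01) U \<and> x \<in> U \<longrightarrow>
      (\<exists>y\<in>U. \<exists>n\<ge>1. \<bar>iter_comp f n x - iter_comp f n y\<bar> > \<delta>)"
    using assms(3) unfolding sensitive_def by blast
  interpret sys f m \<delta> using assms(1,2) dp sd by unfold_locales
  obtain \<eta> where ep: "\<eta> > 0" and C': "\<forall>a b. 0 \<le> a \<longrightarrow> a < b \<longrightarrow> b \<le> 1 \<longrightarrow>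
    (\<exists>N. \<forall>n\<ge>N. \<exists>x\<in>{a..b}. \<exists>y\<in>{a..b}. \<bar>iter_comp f n x - iter_comp f n y\<bar> \<ge> \<eta>)"
    using C by blast
  have cof: "\<exists>N. \<forall>n\<ge>N. n \<in> Nset f U (\<eta>/2)" if U: "openin (top_of_set I01) U" "U \<noteq> {}" for U
  proof -
    obtain x0 where "x0 \<in> U" using U by blast
    then obtain a b where ab: "0 \<le> a" "a < b" "b \<le> 1" "{a..b} \<subseteq> U" using open_int U(1) by blast
    obtain N where N: "\<forall>n\<ge>N. \<exists>x\<in>{a..b}. \<exists>y\<in>{a..b}. \<bar>iter_comp f n x - iter_comp f n y\<bar> \<ge> \<eta>"
      using C' ab(1-3) by blast
    show ?thesis
    proof (intro exI[of _ "max N 1"] allI impI)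
      fix n assume n: "max N 1 \<le> n"
      then have "N \<le> n" "1 \<le> n" by auto
      then obtain x y where xy: "x \<in> {a..b}" "y \<in> {a..b}" "\<bar>iter_comp f n x - iter_comp f n y\<bar> \<ge> \<eta>" using N by blast
      have "\<bar>iter_comp f n x - iter_comp f n y\<bar> > \<eta>/2" using xy(3) ep by linarith
      moreover have "x \<in> U" "y \<in> U" using xy ab(4) by auto
      ultimately show "n \<in> Nset f U (\<eta>/2)" unfolding Nset_def using \<open>1 \<le> n\<close> by blast
    qed
  qed
  have syn: "syndetically_sensitive f"
    unfolding syndetically_sensitive_def
  proof (intro exI[of _ "\<eta>/2"] conjI allI impI)
    show "\<eta>/2 > 0" using ep by simp
    fix U assume "openin (top_of_set I01) U \<and> U \<noteq> {}"
    then obtain N where N: "\<forall>n\<ge>N. n \<in> Nset f U (\<eta>/2)" using cof by blast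
    show "syndetic (Nset f U (\<eta>/2))" unfolding syndetic_def
    proof (intro exI[of _ N] allI)
      fix i have "i + N \<in> {i..i+N} \<inter> Nset f U (\<eta>/2)" using N by auto
      then show "{i..i+N} \<inter> Nset f U (\<eta>/2) \<noteq> {}" by blast
    qed
  qed
  have erg: "ergodically_sensitive f"
    unfolding ergodically_sensitive_def
  proof (intro exI[of _ "\<eta>/2"] conjI allI impI)
    show "\<eta>/2 > 0" using ep by simp
    fix U assume "openin (top_of_set I01) U \<and> U \<noteq> {}"
    then obtain N where N: "\<forall>n\<ge>N. n \<in> Nset f U (\<eta>/2)" using cof by blast
    define S where "S = Nset f U (\<eta>/2)"
    have ev: "\<forall>\<^sub>F n in sequentially. ereal (1/2) \<le> ereal (real (card (S \<inter> {0..<n})) / real n)"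
    proof (rule eventually_sequentiallyI[of "2*N+1"])
      fix n assume n: "2*N+1 \<le> n"
      have "{N..<n} \<subseteq> S \<inter> {0..<n}" using N by (auto simp: S_def)
      then have "card {N..<n} \<le> card (S \<inter> {0..<n})" by (intro card_mono) auto
      then have "n - N \<le> card (S \<inter> {0..<n})" by simp
      then have "real n - real N \<le> real (card (S \<inter> {0..<n}))" using n by linarith
      moreover have "real n > 0" "2 * real N + 1 \<le> real n" using n by linarith+
      ultimately have "1/2 \<le> real (card (S \<inter> {0..<n})) / real n" by (simp add: field_simps)
      then show "ereal (1/2) \<le> ereal (real (card (S \<inter> {0..<n})) / real n)" by simp
    qed
    have "ereal (1/2) \<le> upper_density S" unfolding upper_density_def
      by (rule le_Limsup[OF _ ev]) simp
    moreover have "(0::ereal) < ereal (1/2)" by simp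
    ultimately show "upper_density (Nset f U (\<eta>/2)) > 0" unfolding S_def
      by (rule order.strict_trans2[rotated])
  qed
  have mul: "multi_sensitive f"
    unfolding multi_sensitive_def
  proof (intro exI[of _ "\<eta>/2"] conjI allI impI)
    show "\<eta>/2 > 0" using ep by simp
    fix k :: nat and V :: "nat \<Rightarrow> real set"
    assume V: "\<forall>i\<in>{1..k}. openin (top_of_set I01) (V i) \<and> V i \<noteq> {}"
    have "\<forall>i\<in>{1..k}. \<exists>N. \<forall>n\<ge>N. n \<in> Nset f (V i) (\<eta>/2)"
    proof
      fix i assume "i \<in> {1..k}"
      then have "openin (top_of_set I01) (V i)" "V i \<noteq> {}" using V by auto
      then show "\<exists>N. \<forall>n\<ge>N. n \<in> Nset f (V i) (\<eta>/2)" by (rule cof)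
    qed
    then have "\<exists>N. \<forall>i\<in>{1..k}. \<forall>n\<ge>N. n \<in> Nset f (V i) (\<eta>/2)"
      by (rule fin_cofinite[OF finite_atLeastAtMost, of 1 k "\<lambda>i n. n \<in> Nset f (V i) (\<eta>/2)"])
    then obtain N where N: "\<forall>i\<in>{1..k}. \<forall>n\<ge>N. n \<in> Nset f (V i) (\<eta>/2)" ..
    have "N \<in> (\<Inter>i\<in>{1..k}. Nset f (V i) (\<eta>/2))"
    proof (rule INT_I)
      fix i assume "i \<in> {1..k}"
      then show "N \<in> Nset f (V i) (\<eta>/2)" using N by simp
    qed
    then show "(\<Inter>i\<in>{1..k}. Nset f (V i) (\<eta>/2)) \<noteq> {}" by blast
  qed
  have col: "collectively_sensitive f"
    unfolding collectively_sensitive_def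
  proof (intro exI[of _ "\<delta>/2"] conjI allI impI)
    show "\<delta>/2 > 0" using dp by simp
    fix k :: nat and x :: "nat \<Rightarrow> real" and \<epsilon> :: real
    assume k: "1 \<le> k" and e: "\<epsilon> > 0" and xI: "\<forall>i\<in>{1..k}. x i \<in> I01"
    have x1: "x 1 \<in> I01" using xI k by simp
    define U where "U = {z \<in> I01. \<bar>z - x 1\<bar> < \<epsilon>}"
    have "U = I01 \<inter> ball (x 1) \<epsilon>" by (auto simp: U_def dist_real_def)
    then have Uo: "openin (top_of_set I01) U" unfolding openin_open by blast
    have "x 1 \<in> U" using x1 e by (simp add: U_def)
    then obtain y n where y: "y \<in> U" "n \<ge> 1" "\<bar>iter_comp f n (x 1) - iter_comp f n y\<bar> > \<delta>"
      using sd x1 Uo by blast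
    define yy where "yy i = (if i = 1 then y else x i)" for i
    show "\<exists>y n. n \<ge> 1 \<and> (\<exists>i0\<in>{1..k}. (\<forall>i\<in>{1..k}. y i \<in> I01 \<and> \<bar>x i - y i\<bar> < \<epsilon>) \<and>
         (\<forall>i\<in>{1..k}. \<bar>iter_comp f n (x i) - iter_comp f n (y i0)\<bar> > \<delta>/2 \<or>
                       \<bar>iter_comp f n (y i) - iter_comp f n (x i0)\<bar> > \<delta>/2))"
    proof (intro exI[of _ yy] exI[of _ n] conjI bexI[of _ 1] ballI)
      show "n \<ge> 1" by (rule y(2))
      show "1 \<in> {1..k}" using k by simp
      fix i assume i: "i \<in> {1..k}"
      show "yy i \<in> I01" using y(1) xI i by (auto simp: yy_def U_def)
      show "\<bar>x i - yy i\<bar> < \<epsilon>" using y(1) e by (auto simp: yy_def U_def)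
      show "\<bar>iter_comp f n (x i) - iter_comp f n (yy 1)\<bar> > \<delta>/2 \<or>
            \<bar>iter_comp f n (yy i) - iter_comp f n (x 1)\<bar> > \<delta>/2"
      proof (cases "i = 1")
        case True then show ?thesis using y(3) dp by (simp add: yy_def)
      next
        case False
        have tri: "\<bar>a - b\<bar> + \<bar>a - c\<bar> \<ge> \<bar>c - b\<bar>" for a b c :: real by arith
        have e1: "yy 1 = y" and e2: "yy i = x i" using False by (simp_all add: yy_def)
        have "\<bar>iter_comp f n (x i) - iter_comp f n y\<bar> + \<bar>iter_comp f n (x i) - iter_comp f n (x 1)\<bar> \<ge> \<bar>iter_comp f n (x 1) - iter_comp f n y\<bar>"
          by (rule tri)
        then show ?thesis unfolding e1 e2 using y(3) by linarith
      qed
    qed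
  qed
  show ?thesis using syn erg col mul by blast
qed

end
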